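(* Let $R$ be a ring, $S_0(R)$ the largest element of $\mathrm{Den}(R,0)$ and $Q(R)=S_0(R)^{-1}R=RS_0(R)^{-1}$ with group of units $Q(R)^*$. Then: (1) $S_0(Q(R))=Q(R)^*$ and $S_0(Q(R))\cap R=S_0(R)$; (2) $Q(R)^*$ is generated by $S_0(R)$ and $\{s^{-1}\mid s\in S_0(R)\}$; (3) $Q(R)^*=\{s^{-1}t\mid s,t\in S_0(R)\}=\{ts^{-1}\mid s,t\in S_0(R)\}$; (4) $Q(Q(R))=Q(R)$.
   Context: Rings are associative with $1$. A multiplicatively closed subset $S$ ($1\in S$, $0\notin S$) is a left (resp. right) Ore set if $Sr\cap Rs\ne\emptyset$ (resp. $rS\cap sR\ne\emptyset$) for all $r,s$ with $s\in S$; it is a left denominator set if it is left Ore and $rs=0$ ($s\in S$) implies $tr=0$ for some $t\in S$; right denominator sets are defined symmetrically. $\mathrm{Den}(R,0)$ is the set of subsets which are both left and right denominator sets and consist of regular elements; it has a largest element $S_0(R)$, and $Q(R):=S_0(R)^{-1}R\cong RS_0(R)^{-1}$ is the largest quotient ring of $R$, containing $R$. The same constructions apply to any ring, e.g. $Q(R)$. *)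

theory Defs
  imports Main
begin

text \<open>Rings are modelled as subrings A of an ambient type 'a :: ring_1.
  The ambient type itself (UNIV) plays the role of Q(R).\<close>

definition subring :: "'a::ring_1 set \<Rightarrow> bool" where
  "subring A \<longleftrightarrow> 0 \<in> A \<and> 1 \<in> A \<and> (\<forall>x\<in>A. \<forall>y\<in>A. x + y \<in> A \<and> x * y \<in> A) \<and> (\<forall>x\<in>A. - x \<in> A)"

definition mult_closed :: "'a::ring_1 set \<Rightarrow> 'a set \<Rightarrow> bool" where
  "mult_closed A S \<longleftrightarrow> S \<subseteq> A \<and> 1 \<in> S \<and> 0 \<notin> S \<and> (\<forall>s\<in>S. \<forall>t\<in>S. s * t \<in> S)"

definition left_ore :: "'a::ring_1 set \<Rightarrow> 'a set \<Rightarrow> bool" where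
  "left_ore A S \<longleftrightarrow> mult_closed A S \<and>
     (\<forall>r\<in>A. \<forall>s\<in>S. \<exists>s'\<in>S. \<exists>r'\<in>A. s' * r = r' * s)"

definition right_ore :: "'a::ring_1 set \<Rightarrow> 'a set \<Rightarrow> bool" where
  "right_ore A S \<longleftrightarrow> mult_closed A S \<and>
     (\<forall>r\<in>A. \<forall>s\<in>S. \<exists>s'\<in>S. \<exists>r'\<in>A. r * s' = s * r')"

definition left_denom :: "'a::ring_1 set \<Rightarrow> 'a set \<Rightarrow> bool" where
  "left_denom A S \<longleftrightarrow> left_ore A S \<and>
     (\<forall>r\<in>A. \<forall>s\<in>S. r * s = 0 \<longrightarrow> (\<exists>t\<in>S. t * r = 0))"

definition right_denom :: "'a::ring_1 set \<Rightarrow> 'a set \<Rightarrow> bool" where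
  "right_denom A S \<longleftrightarrow> right_ore A S \<and>
     (\<forall>r\<in>A. \<forall>s\<in>S. s * r = 0 \<longrightarrow> (\<exists>t\<in>S. r * t = 0))"

definition regular_in :: "'a::ring_1 set \<Rightarrow> 'a set" where
  "regular_in A = {x\<in>A. \<forall>r\<in>A. (x * r = 0 \<longrightarrow> r = 0) \<and> (r * x = 0 \<longrightarrow> r = 0)}"

definition Den0 :: "'a::ring_1 set \<Rightarrow> 'a set set" where
  "Den0 A = {S. left_denom A S \<and> right_denom A S \<and> S \<subseteq> regular_in A}"

definition S0 :: "'a::ring_1 set \<Rightarrow> 'a set" where
  "S0 A = (GREATEST S. S \<in> Den0 A)"

definition units :: "'a::ring_1 set" where
  "units = {x. \<exists>y. x * y = 1 \<and> y * x = 1}"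

definition uinv :: "'a::ring_1 \<Rightarrow> 'a" where
  "uinv x = (THE y. x * y = 1 \<and> y * x = 1)"

text \<open>The ambient ring UNIV is the (two-sided) ring of quotients S^{-1}A = A S^{-1}
  of the subring A with respect to S = S0 A: A is a subring, elements of S0 A are
  units, and every element is of the form s^{-1} r and also of the form r s^{-1}.\<close>
definition is_Q :: "'a::ring_1 set \<Rightarrow> bool" where
  "is_Q A \<longleftrightarrow> subring A \<and> S0 A \<subseteq> units \<and>
     (\<forall>q. \<exists>s\<in>S0 A. \<exists>r\<in>A. q = uinv s * r) \<and>
     (\<forall>q. \<exists>s\<in>S0 A. \<exists>r\<in>A. q = r * uinv s)"

inductive_set unit_gen :: "'a::ring_1 set \<Rightarrow> 'a set" for X where
  one: "1 \<in> unit_gen X"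
| gen: "x \<in> X \<Longrightarrow> x \<in> unit_gen X"
| inv: "x \<in> X \<Longrightarrow> uinv x \<in> unit_gen X"
| mult: "x \<in> unit_gen X \<Longrightarrow> y \<in> unit_gen X \<Longrightarrow> x * y \<in> unit_gen X"

end

theory Submission
  imports Defs
begin

lemma unit_inv:
  assumes "x \<in> (units::'a::ring_1 set)"
  shows "x * uinv x = 1 \<and> uinv x * x = 1"
proof -
  obtain y where y: "x * y = 1" "y * x = 1" using assms unfolding units_def by blast
  have "\<And>z. x * z = 1 \<and> z * x = 1 \<Longrightarrow> z = y"
  proof -
    fix z assume "x * z = 1 \<and> z * x = 1"
    then have "z = z * (x * y)" "(z * x) * y = y" using y by auto
    then show "z = y" by (simp add: mult.assoc)
  qed
  note uq = this
  have "uinv x = y" unfolding uinv_def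
  proof (rule the_equality)
    show "x * y = 1 \<and> y * x = 1" using y by (rule conjI)
  next
    fix z assume "x * z = 1 \<and> z * x = 1"
    then show "z = y" by (rule uq)
  qed
  then show ?thesis using y by simp
qed

lemma units_mult: "x \<in> (units::'a::ring_1 set) \<Longrightarrow> y \<in> units \<Longrightarrow> x * y \<in> units"
proof -
  assume a: "x \<in> units" "y \<in> units"
  have "(x*y) * (uinv y * uinv x) = x * (y * uinv y) * uinv x" by (simp add: mult.assoc)
  also have "\<dots> = 1" using unit_inv[OF a(1)] unit_inv[OF a(2)] by simp
  finally have 1: "(x*y) * (uinv y * uinv x) = 1" .
  have "(uinv y * uinv x) * (x * y) = uinv y * (uinv x * x) * y" by (simp add: mult.assoc)
  also have "\<dots> = 1" using unit_inv[OF a(1)] unit_inv[OF a(2)] by simp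
  finally show ?thesis using 1 unfolding units_def by blast
qed

lemma uinv_units: "x \<in> (units::'a::ring_1 set) \<Longrightarrow> uinv x \<in> units"
  using unit_inv[of x] unfolding units_def by blast

lemma one_units: "(1::'a::ring_1) \<in> units" unfolding units_def by auto

lemma uinv_one: "uinv (1::'a::ring_1) = 1"
proof -
  have "1 * uinv (1::'a) = 1" using unit_inv[OF one_units] by blast
  then show ?thesis by simp
qed

lemma zero_not_units: "(0::'a::ring_1) \<notin> units" unfolding units_def by simp

lemma regular_mult:
  assumes A: "subring A" and x: "x \<in> regular_in A" and y: "y \<in> regular_in A"
  shows "x * y \<in> regular_in A"
proof -
  have xA: "x \<in> A" and yA: "y \<in> A" using x y unfolding regular_in_def by auto
  have c: "\<And>a b. a \<in> A \<Longrightarrow> b \<in> A \<Longrightarrow> a * b \<in> A" using A unfolding subring_def by blast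
  show ?thesis unfolding regular_in_def
  proof (intro CollectI conjI ballI impI)
    show "x * y \<in> A" using c xA yA .
  next
    fix r assume r: "r \<in> A" and "x * y * r = 0"
    then have "x * (y * r) = 0" by (simp add: mult.assoc)
    then have "y * r = 0" using x c[OF yA r] unfolding regular_in_def by blast
    then show "r = 0" using y r unfolding regular_in_def by blast
  next
    fix r assume r: "r \<in> A" and "r * (x * y) = 0"
    then have "(r * x) * y = 0" by (simp add: mult.assoc)
    then have "r * x = 0" using y c[OF r xA] unfolding regular_in_def by blast
    then show "r = 0" using x r unfolding regular_in_def by blast
  qed
qed

lemma one_regular: "subring A \<Longrightarrow> 1 \<in> regular_in A"
  unfolding regular_in_def subring_def by auto

lemma zero_not_regular: "subring A \<Longrightarrow> 0 \<notin> regular_in A"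
  unfolding regular_in_def subring_def by force

lemma Den0I:
  assumes A: "subring A" and reg: "S \<subseteq> regular_in A" and one: "1 \<in> S"
    and cl: "\<And>s t. s \<in> S \<Longrightarrow> t \<in> S \<Longrightarrow> s * t \<in> S"
    and lo: "\<And>r s. r \<in> A \<Longrightarrow> s \<in> S \<Longrightarrow> \<exists>s'\<in>S. \<exists>r'\<in>A. s' * r = r' * s"
    and ro: "\<And>r s. r \<in> A \<Longrightarrow> s \<in> S \<Longrightarrow> \<exists>s'\<in>S. \<exists>r'\<in>A. r * s' = s * r'"
  shows "S \<in> Den0 A"
proof -
  have SA: "S \<subseteq> A" using reg unfolding regular_in_def by auto
  have z: "0 \<notin> S" using zero_not_regular[OF A] reg by blast
  have mc: "mult_closed A S" unfolding mult_closed_def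
    using SA one cl z by simp
  have ld: "\<forall>r\<in>A. \<forall>s\<in>S. r * s = 0 \<longrightarrow> (\<exists>t\<in>S. t * r = 0)"
  proof (intro ballI impI)
    fix r s assume "r \<in> A" "s \<in> S" "r * s = 0"
    then have "r = 0" using reg unfolding regular_in_def by blast
    then show "\<exists>t\<in>S. t * r = 0" using one by auto
  qed
  have rd: "\<forall>r\<in>A. \<forall>s\<in>S. s * r = 0 \<longrightarrow> (\<exists>t\<in>S. r * t = 0)"
  proof (intro ballI impI)
    fix r s assume "r \<in> A" "s \<in> S" "s * r = 0"
    then have "r = 0" using reg unfolding regular_in_def by blast
    then show "\<exists>t\<in>S. r * t = 0" using one by auto
  qed
  have "left_ore A S" unfolding left_ore_def using mc lo by simp
  moreover have "right_ore A S" unfolding right_ore_def using mc ro by simp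
  ultimately have "left_denom A S" "right_denom A S"
    unfolding left_denom_def right_denom_def using ld rd by simp_all
  then show ?thesis unfolding Den0_def using reg by simp
qed

inductive_set gmon :: "'a::monoid_mult set \<Rightarrow> 'a set" for X where
  g1: "1 \<in> gmon X"
| gg: "x \<in> X \<Longrightarrow> x \<in> gmon X"
| gm: "x \<in> gmon X \<Longrightarrow> y \<in> gmon X \<Longrightarrow> x * y \<in> gmon X"

lemma S0_greatest:
  assumes A: "subring A"
  shows "S0 A \<in> Den0 A \<and> (\<forall>S\<in>Den0 A. S \<subseteq> S0 A)"
proof -
  define B where "B = \<Union> (Den0 A)"
  define M where "M = gmon B"
  have Breg: "B \<subseteq> regular_in A" unfolding B_def Den0_def by blast
  have Mreg: "M \<subseteq> regular_in A"
  proof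
    fix x assume "x \<in> M" then show "x \<in> regular_in A" unfolding M_def
      by (induction rule: gmon.induct) (use Breg one_regular[OF A] regular_mult[OF A] in auto)
  qed
  have cA: "\<And>a b. a \<in> A \<Longrightarrow> b \<in> A \<Longrightarrow> a * b \<in> A" using A unfolding subring_def by blast
  have lo: "\<And>r s. s \<in> M \<Longrightarrow> r \<in> A \<Longrightarrow> \<exists>s'\<in>M. \<exists>r'\<in>A. s' * r = r' * s"
  proof -
    fix r s assume "s \<in> M" "r \<in> A"
    then show "\<exists>s'\<in>M. \<exists>r'\<in>A. s' * r = r' * s" unfolding M_def
    proof (induction arbitrary: r rule: gmon.induct)
      case g1 then show ?case using gmon.g1 by force
    next
      case (gg x)
      then obtain S where S: "S \<in> Den0 A" "x \<in> S" unfolding B_def by blast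
      then have "left_ore A S" unfolding Den0_def left_denom_def by blast
      then obtain s' r' where "s' \<in> S" "r' \<in> A" "s' * r = r' * x"
        using S(2) gg.prems unfolding left_ore_def by blast
      moreover have "s' \<in> gmon B" using \<open>s' \<in> S\<close> S(1) unfolding B_def by (blast intro: gmon.gg)
      ultimately show ?case by blast
    next
      case (gm x y)
      obtain m2 r2 where m2: "m2 \<in> gmon B" "r2 \<in> A" "m2 * r = r2 * y" using gm.IH(2) gm.prems by blast
      obtain m1 r1 where m1: "m1 \<in> gmon B" "r1 \<in> A" "m1 * r2 = r1 * x" using gm.IH(1) m2(2) by blast
      have "(m1 * m2) * r = r1 * (x * y)"
        by (metis m1(3) m2(3) mult.assoc)
      then show ?case using m1 m2 gmon.gm by blast
    qed
  qed
  have ro: "\<And>r s. s \<in> M \<Longrightarrow> r \<in> A \<Longrightarrow> \<exists>s'\<in>M. \<exists>r'\<in>A. r * s' = s * r'"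
  proof -
    fix r s assume "s \<in> M" "r \<in> A"
    then show "\<exists>s'\<in>M. \<exists>r'\<in>A. r * s' = s * r'" unfolding M_def
    proof (induction arbitrary: r rule: gmon.induct)
      case g1 then show ?case using gmon.g1 by force
    next
      case (gg x)
      then obtain S where S: "S \<in> Den0 A" "x \<in> S" unfolding B_def by blast
      then have "right_ore A S" unfolding Den0_def right_denom_def by blast
      then obtain s' r' where "s' \<in> S" "r' \<in> A" "r * s' = x * r'"
        using S(2) gg.prems unfolding right_ore_def by blast
      moreover have "s' \<in> gmon B" using \<open>s' \<in> S\<close> S(1) unfolding B_def by (blast intro: gmon.gg)
      ultimately show ?case by blast
    next
      case (gm x y)
      obtain m1 r1 where m1: "m1 \<in> gmon B" "r1 \<in> A" "r * m1 = x * r1" using gm.IH(1) gm.prems by blast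
      obtain m2 r2 where m2: "m2 \<in> gmon B" "r2 \<in> A" "r1 * m2 = y * r2" using gm.IH(2) m1(2) by blast
      have "r * (m1 * m2) = (x * y) * r2"
        by (metis m1(3) m2(3) mult.assoc)
      moreover have "m1 * m2 \<in> gmon B" using m1(1) m2(1) by (rule gmon.gm)
      ultimately show ?case using m2(2) by blast
    qed
  qed
  have MD: "M \<in> Den0 A"
    apply (rule Den0I[OF A Mreg])
    subgoal unfolding M_def by (rule gmon.g1)
    subgoal unfolding M_def by (rule gmon.gm)
    subgoal by (rule lo[rotated])
    subgoal by (rule ro[rotated])
    done
  have sub: "\<forall>S\<in>Den0 A. S \<subseteq> M" unfolding M_def B_def by (blast intro: gmon.gg)
  have "S0 A = M" unfolding S0_def
    by (rule Greatest_equality[where P="\<lambda>S. S \<in> Den0 A", OF MD]) (use sub in simp)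
  then show ?thesis using MD sub by simp
qed

lemma units_regular: "x \<in> (units::'a::ring_1 set) \<Longrightarrow> x \<in> regular_in UNIV"
proof -
  assume x: "x \<in> units"
  have "r = 0" if "x * r = 0" for r
  proof -
    have "uinv x * (x * r) = 0" using that by simp
    then show "r = 0" using unit_inv[OF x] by (simp add: mult.assoc[symmetric])
  qed
  moreover have "r = 0" if "r * x = 0" for r
  proof -
    have "(r * x) * uinv x = 0" using that by simp
    then show "r = 0" using unit_inv[OF x] by (simp add: mult.assoc)
  qed
  ultimately show ?thesis unfolding regular_in_def by blast
qed

theorem theorem4p4:
  fixes R :: "'a::ring_1 set"
  assumes "is_Q R"
  shows "(S0 (UNIV :: 'a set) = units \<and> S0 (UNIV :: 'a set) \<inter> R = S0 R)
    \<and> units = unit_gen (S0 R \<union> uinv ` S0 R)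
    \<and> units = {uinv s * t | s t. s \<in> S0 R \<and> t \<in> S0 R}
    \<and> units = {t * uinv s | s t. s \<in> S0 R \<and> t \<in> S0 R}
    \<and> is_Q (UNIV :: 'a set)"
proof -
  have Rsub: "subring R" and Su: "S0 R \<subseteq> units"
    and lf: "\<And>q. \<exists>s\<in>S0 R. \<exists>r\<in>R. q = uinv s * r"
    and rf: "\<And>q. \<exists>s\<in>S0 R. \<exists>r\<in>R. q = r * uinv s"
    using assms unfolding is_Q_def by blast+
  have cR: "\<And>a b. a \<in> R \<Longrightarrow> b \<in> R \<Longrightarrow> a * b \<in> R" using Rsub unfolding subring_def by blast
  have GR: "S0 R \<in> Den0 R" "\<And>T. T \<in> Den0 R \<Longrightarrow> T \<subseteq> S0 R" using S0_greatest[OF Rsub] by blast+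
  have SR: "S0 R \<subseteq> R" using GR(1) unfolding Den0_def regular_in_def by blast
  have UU: "subring (UNIV::'a set)" unfolding subring_def by simp
  have GU: "S0 (UNIV::'a set) \<in> Den0 UNIV" "\<And>T. T \<in> Den0 UNIV \<Longrightarrow> T \<subseteq> S0 (UNIV::'a set)"
    using S0_greatest[OF UU] by blast+
  have unD: "(units::'a set) \<in> Den0 UNIV"
  proof (rule Den0I[OF UU])
    show "units \<subseteq> regular_in UNIV" using units_regular by blast
    show "1 \<in> units" by (rule one_units)
    show "\<And>s t::'a. s \<in> units \<Longrightarrow> t \<in> units \<Longrightarrow> s * t \<in> units" by (rule units_mult)
    show "\<And>r s::'a. r \<in> UNIV \<Longrightarrow> s \<in> units \<Longrightarrow> \<exists>s'\<in>units. \<exists>r'\<in>UNIV. s' * r = r' * s"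
    proof -
      fix r s :: 'a assume "r \<in> UNIV" "s \<in> units"
      then have "1 * r = (r * uinv s) * s" using unit_inv[of s] by (simp add: mult.assoc)
      then show "\<exists>s'\<in>units. \<exists>r'\<in>UNIV. s' * r = r' * s" using one_units by blast
    qed
    show "\<And>r s::'a. r \<in> UNIV \<Longrightarrow> s \<in> units \<Longrightarrow> \<exists>s'\<in>units. \<exists>r'\<in>UNIV. r * s' = s * r'"
    proof -
      fix r s :: 'a assume "r \<in> UNIV" "s \<in> units"
      then have "r * 1 = s * (uinv s * r)" using unit_inv[of s] by (simp add: mult.assoc[symmetric])
      then show "\<exists>s'\<in>units. \<exists>r'\<in>UNIV. r * s' = s * r'" using one_units by blast
    qed
  qed
  define Q where "Q = S0 (UNIV::'a set)"
  have uQ: "units \<subseteq> Q" using GU(2)[OF unD] unfolding Q_def .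
  have Qmc: "\<And>a b. a \<in> Q \<Longrightarrow> b \<in> Q \<Longrightarrow> a * b \<in> Q"
    using GU(1) unfolding Q_def Den0_def left_denom_def left_ore_def mult_closed_def by blast
  have Qlo: "\<And>a t. t \<in> Q \<Longrightarrow> \<exists>u\<in>Q. \<exists>q. u * a = q * t"
    using GU(1) unfolding Q_def Den0_def left_denom_def left_ore_def by blast
  have Qro: "\<And>a t. t \<in> Q \<Longrightarrow> \<exists>u\<in>Q. \<exists>q. a * u = t * q"
    using GU(1) unfolding Q_def Den0_def right_denom_def right_ore_def by blast
  have Qreg: "Q \<subseteq> regular_in UNIV" using GU(1) unfolding Q_def Den0_def by blast
  have QRD: "Q \<inter> R \<in> Den0 R"
  proof (rule Den0I[OF Rsub])
    show "Q \<inter> R \<subseteq> regular_in R" using Qreg unfolding regular_in_def by blast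
    show "1 \<in> Q \<inter> R" using uQ one_units Rsub unfolding subring_def by blast
    show "\<And>s t. s \<in> Q \<inter> R \<Longrightarrow> t \<in> Q \<inter> R \<Longrightarrow> s * t \<in> Q \<inter> R" using Qmc cR by blast
    show "\<exists>s'\<in>Q \<inter> R. \<exists>r'\<in>R. s' * a = r' * t" if a: "a \<in> R" and t: "t \<in> Q \<inter> R" for a t
    proof -
      obtain u q where u: "u \<in> Q" "u * a = q * t" using Qlo t by blast
      obtain s1 b where s1: "s1 \<in> S0 R" "b \<in> R" "q = uinv s1 * b" using lf by blast
      have s1u: "s1 \<in> units" using s1(1) Su by blast
      have "s1 * u * a = s1 * (uinv s1 * b * t)" using u(2) s1(3) by (simp add: mult.assoc)
      also have "\<dots> = (s1 * uinv s1) * b * t" by (simp add: mult.assoc)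
      also have "\<dots> = b * t" using unit_inv[OF s1u] by simp
      finally have e1: "s1 * u * a = b * t" .
      obtain s2 c where s2: "s2 \<in> S0 R" "c \<in> R" "s1 * u = uinv s2 * c" using lf by blast
      have s2u: "s2 \<in> units" using s2(1) Su by blast
      have "s2 * s1 * u = s2 * (uinv s2 * c)" using s2(3) by (simp add: mult.assoc)
      also have "\<dots> = (s2 * uinv s2) * c" by (simp add: mult.assoc)
      also have "\<dots> = c" using unit_inv[OF s2u] by simp
      finally have cq: "c = s2 * s1 * u" by simp
      have cQ: "c \<in> Q" using cq Qmc uQ s1u s2u u(1) by blast
      have "c * a = (s2 * b) * t" using cq e1 by (metis mult.assoc)
      moreover have "s2 * b \<in> R" using cR SR s2(1) s1(2) by blast
      ultimately show ?thesis using cQ s2(2) by blast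
    qed
    show "\<exists>s'\<in>Q \<inter> R. \<exists>r'\<in>R. a * s' = t * r'" if a: "a \<in> R" and t: "t \<in> Q \<inter> R" for a t
    proof -
      obtain u q where u: "u \<in> Q" "a * u = t * q" using Qro t by blast
      obtain s1 b where s1: "s1 \<in> S0 R" "b \<in> R" "q = b * uinv s1" using rf by blast
      have s1u: "s1 \<in> units" using s1(1) Su by blast
      have "a * u * s1 = t * (b * uinv s1) * s1" using u(2) s1(3) by simp
      also have "\<dots> = t * b * (uinv s1 * s1)" by (simp add: mult.assoc)
      also have "\<dots> = t * b" using unit_inv[OF s1u] by simp
      finally have e1: "a * u * s1 = t * b" .
      obtain s2 c where s2: "s2 \<in> S0 R" "c \<in> R" "u * s1 = c * uinv s2" using rf by blast
      have s2u: "s2 \<in> units" using s2(1) Su by blast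
      have "u * s1 * s2 = c * uinv s2 * s2" using s2(3) by simp
      also have "\<dots> = c * (uinv s2 * s2)" by (simp add: mult.assoc)
      also have "\<dots> = c" using unit_inv[OF s2u] by simp
      finally have cq: "c = u * s1 * s2" by simp
      have cQ: "c \<in> Q" using cq Qmc uQ s1u s2u u(1) by blast
      have "a * c = t * (b * s2)" using cq e1 by (metis mult.assoc)
      moreover have "b * s2 \<in> R" using cR SR s2(1) s1(2) by blast
      ultimately show ?thesis using cQ s2(2) by blast
    qed
  qed
  have QRS: "Q \<inter> R \<subseteq> S0 R" using GR(2)[OF QRD] .
  have Qu: "Q \<subseteq> units"
  proof
    fix q assume q: "q \<in> Q"
    obtain s r where sr: "s \<in> S0 R" "r \<in> R" "q = uinv s * r" using lf by blast
    have su: "s \<in> units" using sr(1) Su by blast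
    have "s * q = (s * uinv s) * r" using sr(3) by (simp add: mult.assoc)
    then have rq: "r = s * q" using unit_inv[OF su] by simp
    have "r \<in> Q" using rq Qmc uQ su q by blast
    then have "r \<in> units" using sr(2) QRS Su by blast
    then show "q \<in> units" using sr(3) units_mult uinv_units su by blast
  qed
  have QU: "Q = units" using Qu uQ by blast
  have QR: "Q \<inter> R = S0 R" using QRS Su SR uQ by blast
  have UR: "units \<inter> R = S0 R" using QR QU by simp
  have F3: "units = {uinv s * t | s t. s \<in> S0 R \<and> t \<in> S0 R}"
  proof (intro equalityI subsetI)
    fix u :: 'a assume uu: "u \<in> units"
    obtain s r where sr: "s \<in> S0 R" "r \<in> R" "u = uinv s * r" using lf by blast
    have su: "s \<in> units" using sr(1) Su by blast
    have "s * u = (s * uinv s) * r" using sr(3) by (simp add: mult.assoc)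
    then have rq: "r = s * u" using unit_inv[OF su] by simp
    have "r \<in> S0 R" using rq units_mult[OF su uu] sr(2) UR by blast
    then show "u \<in> {uinv s * t | s t. s \<in> S0 R \<and> t \<in> S0 R}" using sr by blast
  next
    fix u assume "u \<in> {uinv s * t | s t. s \<in> S0 R \<and> t \<in> S0 R}"
    then show "u \<in> units" using Su units_mult uinv_units by blast
  qed
  have F4: "units = {t * uinv s | s t. s \<in> S0 R \<and> t \<in> S0 R}"
  proof (intro equalityI subsetI)
    fix u :: 'a assume uu: "u \<in> units"
    obtain s r where sr: "s \<in> S0 R" "r \<in> R" "u = r * uinv s" using rf by blast
    have su: "s \<in> units" using sr(1) Su by blast
    have "u * s = r * (uinv s * s)" using sr(3) by (simp add: mult.assoc)
    then have rq: "r = u * s" using unit_inv[OF su] by simp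
    have "r \<in> S0 R" using rq units_mult[OF uu su] sr(2) UR by blast
    then show "u \<in> {t * uinv s | s t. s \<in> S0 R \<and> t \<in> S0 R}" using sr by blast
  next
    fix u assume "u \<in> {t * uinv s | s t. s \<in> S0 R \<and> t \<in> S0 R}"
    then show "u \<in> units" using Su units_mult uinv_units by blast
  qed
  have F2: "units = unit_gen (S0 R \<union> uinv ` S0 R)"
  proof (intro equalityI subsetI)
    fix u :: 'a assume "u \<in> units"
    then obtain s t where "u = uinv s * t" "s \<in> S0 R" "t \<in> S0 R" using F3 by blast
    then show "u \<in> unit_gen (S0 R \<union> uinv ` S0 R)"
      by (metis UnI1 UnI2 image_eqI unit_gen.gen unit_gen.mult)
  next
    fix u assume "u \<in> unit_gen (S0 R \<union> uinv ` S0 R)"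
    then show "u \<in> units"
      by (induction rule: unit_gen.induct) (use Su one_units uinv_units units_mult in auto)
  qed
  have F5: "is_Q (UNIV :: 'a set)"
    unfolding is_Q_def using UU QU one_units uinv_one unfolding Q_def
    by (metis UNIV_I mult_1_left mult_1_right order_refl)
  show ?thesis using QU QR F2 F3 F4 F5 unfolding Q_def by blast
qed

end
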